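(* Let $X$ be a smooth, pointed, oriented, closed, connected manifold, $\Xi$ a set of DG Morse data on $X$ with Morse function $f$ and twisting cocycle $\{m_{x,y}\}$, and let $\boldsymbol{\varphi}=\{\varphi_n\}_{n\ge1}:(\mathcal{A},\nu^{\mathcal{A}})\to(\mathcal{B},\nu^{\mathcal{B}})$ be a morphism of $\mathcal{A}_\infty$-modules over $C_*(\Omega X)$. Then the map $\tilde\varphi:C_*(X,\Xi,\mathcal{A})\to C_*(X,\Xi,\mathcal{B})$ defined by $$\tilde\varphi=\sum_{n\ge0}(\varphi_{n+1}\otimes1)\tilde{\mathbf m}^n$$ is a morphism of complexes.
   Context: $C_*(\Omega X)$ (normalized cubical chains on Moore based loops) is viewed as an $\mathcal{A}_\infty$-algebra with $\mu_1$ the differential, $\mu_2$ the Pontryagin product and $\mu_i=0$ for $i\ge3$. All functional expressions obey the Koszul sign rule $(f\otimes g)(x\otimes y)=(-1)^{|g||x|}f(x)\otimes g(y)$. An $\mathcal{A}_\infty$-module over $C_*(\Omega X)$ is a graded $\mathbb{Z}$-module $\mathcal{A}$ with maps $\nu_n:\mathcal{A}\otimes C_*(\Omega X)^{\otimes n-1}\to\mathcal{A}$ of degree $n-2$ ($\nu_1$ the differential) such that for all $N\ge1$: $\sum_{s+t=N,s\ge1}(-1)^{st}\nu_{t+1}(\nu_s\otimes1^{\otimes t})+\sum_{r+s+t=N,\,r,s\ge1}(-1)^{r+st}\nu_{r+t+1}(1^{\otimes r}\otimes\mu_s\otimes1^{\otimes t})=0$. A morphism $\boldsymbol\varphi:(\mathcal{A},\nu^A)\to(\mathcal{B},\nu^B)$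 is a family of maps $\varphi_n:\mathcal{A}\otimes C_*(\Omega X)^{\otimes n-1}\to\mathcal{B}$ of degree $n-1$ with, for all $N\ge1$, $\sum_{s+t=N}(-1)^{st}\varphi_{t+1}(\nu^A_s\otimes1^{\otimes t})+\sum_{r+s+t=N,r\ge1}(-1)^{r+st}\varphi_{r+t+1}(1^{\otimes r}\otimes\mu_s\otimes1^{\otimes t})=\sum_{s+t=N}(-1)^{(s+1)t}\nu^B_{t+1}(\varphi_s\otimes1^{\otimes t})$. Twisted complexes: given a twisting cocycle $m_{x,y}\in C_{|x|-|y|-1}(\Omega X)$ ($x,y\in\mathrm{Crit}(f)$, $\partial m_{x,y}=\sum_z(-1)^{|x|-|z|}m_{x,z}m_{z,y}$), set $\mathbf m(x)=\sum_y m_{x,y}\otimes y$ and extend to $\tilde{\mathbf m}$ of degree $-1$ on $\mathcal{A}\otimes TC_*(\Omega X)\otimes\mathbb{Z}\mathrm{Crit}(f)$ by $\tilde{\mathbf m}(\alpha\otimes\gamma_1\otimes\dots\otimes\gamma_k\otimes x)=(1^{\otimes k+1}\otimes\mathbf m)(\alpha\otimes\gamma_1\otimes\dots\otimes\gamma_k\otimes x)$. The complex $C_*(X,\Xi,\mathcal{A})=\mathcal{A}\otimes\mathbb{Z}\mathrm{Crit}(f)$ has differential $\partial=\sum_{n\ge0}(\nu_{n+1}\otimes1)\tilde{\mathbf m}^n$, where $m_{x,y}$ is the Barraud–Cornea twisting cocycle of the DG Morse data $\Xi$ (Morse–Smale pair, orientations, representing chain system of moduli spaces of broken trajectories, tree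 rooted at the basepoint with vertices the critical points, homotopy inverse of the tree collapse). *)

theory Defs
  imports Main
begin

text \<open>Graded abelian groups are
  modelled as an ambient abelian group with a family of homogeneous components indexed
  by the degree (an internal direct sum).  Elements of tensor products are handled on
  homogeneous elementary tensors, which generate; all structure maps are multilinear.\<close>

definition ks :: "int \<Rightarrow> 'a::ab_group_add \<Rightarrow> 'a" where
  "ks e x = (if even e then x else - x)"

definition fsum :: "(nat \<Rightarrow> 'a::ab_group_add) \<Rightarrow> 'a" where
  "fsum f = sum f {n. f n \<noteq> 0}"

definition graded :: "(int \<Rightarrow> 'a::ab_group_add set) \<Rightarrow> bool" where
  "graded G \<longleftrightarrow>
     (\<forall>d. 0 \<in> G d \<and> (\<forall>x\<in>G d. \<forall>y\<in>G d. x + y \<in> G d \<and> - x \<in> G d))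
   \<and> (\<forall>x. \<exists>f. finite {d. f d \<noteq> 0} \<and> (\<forall>d. f d \<in> G d) \<and> x = sum f {d. f d \<noteq> 0})
   \<and> (\<forall>f. finite {d. f d \<noteq> 0} \<and> (\<forall>d. f d \<in> G d) \<and> sum f {d. f d \<noteq> 0} = 0
          \<longrightarrow> (\<forall>d. f d = 0))"

definition hom_list :: "(int \<Rightarrow> 'c set) \<Rightarrow> 'c list \<Rightarrow> int list \<Rightarrow> bool" where
  "hom_list G gs ds \<longleftrightarrow> length gs = length ds \<and> (\<forall>i<length gs. gs ! i \<in> G (ds ! i))"

text \<open>DG algebra (the A-infinity algebra C_*(Omega X) with mu_1 = differential,
  mu_2 = product, mu_i = 0 for i \<ge> 3), nonnegatively graded like chains.\<close>
definition dga :: "(int \<Rightarrow> 'c::ab_group_add set) \<Rightarrow> ('c \<Rightarrow> 'c) \<Rightarrow> ('c \<Rightarrow> 'c \<Rightarrow> 'c) \<Rightarrow> bool" where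
  "dga GC mu1 mu2 \<longleftrightarrow> graded GC \<and> (\<forall>d<0. GC d = {0})
   \<and> (\<forall>d x. x \<in> GC d \<longrightarrow> mu1 x \<in> GC (d - 1))
   \<and> (\<forall>d e x y. x \<in> GC d \<longrightarrow> y \<in> GC e \<longrightarrow> mu2 x y \<in> GC (d + e))
   \<and> (\<forall>x y. mu1 (x + y) = mu1 x + mu1 y)
   \<and> (\<forall>x y z. mu2 (x + y) z = mu2 x z + mu2 y z \<and> mu2 z (x + y) = mu2 z x + mu2 z y)
   \<and> (\<forall>x. mu1 (mu1 x) = 0)
   \<and> (\<forall>d x y. x \<in> GC d \<longrightarrow> mu1 (mu2 x y) = mu2 (mu1 x) y + ks d (mu2 x (mu1 y)))
   \<and> (\<forall>x y z. mu2 (mu2 x y) z = mu2 x (mu2 y z))"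

definition mu :: "('c \<Rightarrow> 'c) \<Rightarrow> ('c \<Rightarrow> 'c \<Rightarrow> 'c) \<Rightarrow> nat \<Rightarrow> 'c list \<Rightarrow> 'c::ab_group_add" where
  "mu mu1 mu2 s gs = (if s = 1 then mu1 (gs ! 0) else if s = 2 then mu2 (gs ! 0) (gs ! 1) else 0)"

text \<open>(1^{r} \<otimes> mu_s \<otimes> 1^{t}) on alpha \<otimes> gs, without sign: the first r factors are
  alpha and the first r-1 elements of gs.\<close>
definition replace_mu :: "('c \<Rightarrow> 'c) \<Rightarrow> ('c \<Rightarrow> 'c \<Rightarrow> 'c) \<Rightarrow> nat \<Rightarrow> nat \<Rightarrow> 'c list \<Rightarrow> 'c::ab_group_add list" where
  "replace_mu mu1 mu2 r s gs =
     take (r - 1) gs @ [mu mu1 mu2 s (take s (drop (r - 1) gs))] @ drop (r - 1 + s) gs"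

definition ainf_module ::
  "(int \<Rightarrow> 'c::ab_group_add set) \<Rightarrow> ('c \<Rightarrow> 'c) \<Rightarrow> ('c \<Rightarrow> 'c \<Rightarrow> 'c)
   \<Rightarrow> (int \<Rightarrow> 'a::ab_group_add set) \<Rightarrow> (nat \<Rightarrow> 'a \<Rightarrow> 'c list \<Rightarrow> 'a) \<Rightarrow> bool" where
  "ainf_module GC mu1 mu2 GA nu \<longleftrightarrow> graded GA
   \<and> (\<forall>n\<ge>1. \<forall>a d gs ds. a \<in> GA d \<longrightarrow> hom_list GC gs ds \<longrightarrow> length gs = n - 1 \<longrightarrow>
        nu n a gs \<in> GA (d + sum_list ds + int n - 2))
   \<and> (\<forall>n\<ge>1. \<forall>a b gs. length gs = n - 1 \<longrightarrow> nu n (a + b) gs = nu n a gs + nu n b gs)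
   \<and> (\<forall>n\<ge>1. \<forall>a gs i g h. length gs = n - 1 \<longrightarrow> i < length gs \<longrightarrow>
        nu n a (gs[i := g + h]) = nu n a (gs[i := g]) + nu n a (gs[i := h]))
   \<and> (\<forall>N\<ge>1. \<forall>a d gs ds. a \<in> GA d \<longrightarrow> hom_list GC gs ds \<longrightarrow> length gs = N - 1 \<longrightarrow>
        (\<Sum>s\<in>{1..N}. ks (int (s * (N - s)))
            (nu (N - s + 1) (nu s a (take (s - 1) gs)) (drop (s - 1) gs)))
      + (\<Sum>r\<in>{1..N}. \<Sum>s\<in>{1..N - r}. ks (int (r + s * (N - r - s)))
            (ks ((int s - 2) * (d + sum_list (take (r - 1) ds)))
               (nu (N - s + 1) a (replace_mu mu1 mu2 r s gs)))) = 0)"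

definition ainf_morphism ::
  "(int \<Rightarrow> 'c::ab_group_add set) \<Rightarrow> ('c \<Rightarrow> 'c) \<Rightarrow> ('c \<Rightarrow> 'c \<Rightarrow> 'c)
   \<Rightarrow> (int \<Rightarrow> 'a::ab_group_add set) \<Rightarrow> (nat \<Rightarrow> 'a \<Rightarrow> 'c list \<Rightarrow> 'a)
   \<Rightarrow> (int \<Rightarrow> 'b::ab_group_add set) \<Rightarrow> (nat \<Rightarrow> 'b \<Rightarrow> 'c list \<Rightarrow> 'b)
   \<Rightarrow> (nat \<Rightarrow> 'a \<Rightarrow> 'c list \<Rightarrow> 'b) \<Rightarrow> bool" where
  "ainf_morphism GC mu1 mu2 GA nuA GB nuB phi \<longleftrightarrow>
     (\<forall>n\<ge>1. \<forall>a d gs ds. a \<in> GA d \<longrightarrow> hom_list GC gs ds \<longrightarrow> length gs = n - 1 \<longrightarrow>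
        phi n a gs \<in> GB (d + sum_list ds + int n - 1))
   \<and> (\<forall>n\<ge>1. \<forall>a b gs. length gs = n - 1 \<longrightarrow> phi n (a + b) gs = phi n a gs + phi n b gs)
   \<and> (\<forall>n\<ge>1. \<forall>a gs i g h. length gs = n - 1 \<longrightarrow> i < length gs \<longrightarrow>
        phi n a (gs[i := g + h]) = phi n a (gs[i := g]) + phi n a (gs[i := h]))
   \<and> (\<forall>N\<ge>1. \<forall>a d gs ds. a \<in> GA d \<longrightarrow> hom_list GC gs ds \<longrightarrow> length gs = N - 1 \<longrightarrow>
        (\<Sum>s\<in>{1..N}. ks (int (s * (N - s)))
            (phi (N - s + 1) (nuA s a (take (s - 1) gs)) (drop (s - 1) gs)))
      + (\<Sum>r\<in>{1..N}. \<Sum>s\<in>{1..N - r}. ks (int (r + s * (N - r - s)))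
            (ks ((int s - 2) * (d + sum_list (take (r - 1) ds)))
               (phi (N - s + 1) a (replace_mu mu1 mu2 r s gs))))
      = (\<Sum>s\<in>{1..N}. ks (int ((s + 1) * (N - s)))
            (nuB (N - s + 1) (phi s a (take (s - 1) gs)) (drop (s - 1) gs))))"

definition twisting_cocycle ::
  "(int \<Rightarrow> 'c::ab_group_add set) \<Rightarrow> ('c \<Rightarrow> 'c) \<Rightarrow> ('c \<Rightarrow> 'c \<Rightarrow> 'c)
   \<Rightarrow> 'x list \<Rightarrow> ('x \<Rightarrow> int) \<Rightarrow> ('x \<Rightarrow> 'x \<Rightarrow> 'c) \<Rightarrow> bool" where
  "twisting_cocycle GC mu1 mu2 crit ind m \<longleftrightarrow> distinct crit
   \<and> (\<forall>x\<in>set crit. \<forall>y\<in>set crit. m x y \<in> GC (ind x - ind y - 1))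
   \<and> (\<forall>x\<in>set crit. \<forall>y\<in>set crit.
        mu1 (m x y) = (\<Sum>z\<leftarrow>crit. ks (ind x - ind z) (mu2 (m x z) (m z y))))"

text \<open>Elementary tensors alpha \<otimes> g_1 \<otimes> ... \<otimes> g_k \<otimes> x, recorded as
  (e, alpha, [g_1..g_k], x) with e = |alpha| + sum |g_i|; formal sums are lists.
  One application of m-tilde: (1^{k+1} \<otimes> m), with Koszul sign (-1)^{|m| e}, |m| = -1.\<close>
definition mt_step :: "'x list \<Rightarrow> ('x \<Rightarrow> int) \<Rightarrow> ('x \<Rightarrow> 'x \<Rightarrow> 'c)
    \<Rightarrow> int \<times> 'a::ab_group_add \<times> 'c list \<times> 'x \<Rightarrow> (int \<times> 'a \<times> 'c list \<times> 'x) list" where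
  "mt_step crit ind m = (\<lambda>(e, a, gs, x).
     map (\<lambda>y. (e + ind x - ind y - 1, ks e a, gs @ [m x y], y)) crit)"

definition mt_pow :: "'x list \<Rightarrow> ('x \<Rightarrow> int) \<Rightarrow> ('x \<Rightarrow> 'x \<Rightarrow> 'c) \<Rightarrow> nat
    \<Rightarrow> (int \<times> 'a::ab_group_add \<times> 'c list \<times> 'x) list \<Rightarrow> (int \<times> 'a \<times> 'c list \<times> 'x) list" where
  "mt_pow crit ind m n = ((\<lambda>L. concat (map (mt_step crit ind m) L)) ^^ n)"

text \<open>An element of A \<otimes> Z Crit homogeneous of total degree d is c : 'x => 'a with
  c x \<in> A_{d - |x|}, standing for sum_x c x \<otimes> x.\<close>
definition start_list :: "'x list \<Rightarrow> ('x \<Rightarrow> int) \<Rightarrow> int \<Rightarrow> ('x \<Rightarrow> 'a)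
    \<Rightarrow> (int \<times> 'a \<times> 'c list \<times> 'x) list" where
  "start_list crit ind d c = map (\<lambda>x. (d - ind x, c x, [], x)) crit"

text \<open>sum_{n \<ge> 0} (F_{n+1} \<otimes> 1) m-tilde^n, applied to a degree d element c.
  With F = nu this is the twisted differential, with F = phi it is phi-tilde.\<close>
definition twisted :: "(nat \<Rightarrow> 'a \<Rightarrow> 'c list \<Rightarrow> 'b::ab_group_add) \<Rightarrow> 'x list \<Rightarrow> ('x \<Rightarrow> int)
    \<Rightarrow> ('x \<Rightarrow> 'x \<Rightarrow> 'c) \<Rightarrow> int \<Rightarrow> ('x \<Rightarrow> 'a::ab_group_add) \<Rightarrow> ('x \<Rightarrow> 'b)" where
  "twisted F crit ind m d c = (\<lambda>z. fsum (\<lambda>n.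
     sum_list (map (\<lambda>(e, a, gs, x). if x = z then F (n + 1) a gs else 0)
       (mt_pow crit ind m n (start_list crit ind d c)))))"

end

theory Submission
  imports Defs
begin



lemma ks_add: "ks a (ks b x) = ks (a + b) x"
  by (auto simp: ks_def)
lemma ks_cong: "even (a - b) \<Longrightarrow> ks a x = ks b x"
proof -
  assume "even (a - b)" then have "even a = even b" by presburger
  then show ?thesis unfolding ks_def by simp
qed
lemma ks_neg_cong: "odd (a - b) \<Longrightarrow> ks a x = - ks b x"
proof -
  assume "odd (a - b)" then have "even a = odd b" by presburger
  then show ?thesis unfolding ks_def by simp
qed
lemma ks_zero[simp]: "ks 0 x = x" by (simp add: ks_def)
lemma ks_0[simp]: "ks e 0 = 0" by (simp add: ks_def)
lemma ks_plus: "ks e (x + y) = ks e x + ks e y" by (simp add: ks_def)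
lemma ks_minus: "ks e (- x) = - ks e x" by (simp add: ks_def)
lemma ks_sum: "ks e (sum f S) = sum (\<lambda>i. ks e (f i)) S"
  by (simp add: ks_def sum_negf)

definition paths :: "'x list \<Rightarrow> nat \<Rightarrow> 'x \<Rightarrow> 'x list set" where
 "paths crit n z = {p. length p = Suc n \<and> set p \<subseteq> set crit \<and> last p = z}"

lemma finite_paths: "finite (paths crit n z)"
proof -
  have "paths crit n z \<subseteq> {p. set p \<subseteq> set crit \<and> length p = Suc n}"
    unfolding paths_def by auto
  moreover have "finite {p. set p \<subseteq> set crit \<and> length p = Suc n}"
    by (rule finite_lists_length_eq) simp
  ultimately show ?thesis by (rule finite_subset)
qed

fun mpth :: "('x\<Rightarrow>'x\<Rightarrow>'c) \<Rightarrow> 'x list \<Rightarrow> 'c list" where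
 "mpth m (x # y # ys) = m x y # mpth m (y # ys)" | "mpth m _ = []"

fun sgl :: "('x \<Rightarrow> int) \<Rightarrow> int \<Rightarrow> 'x list \<Rightarrow> int" where
 "sgl ind d [] = 0" | "sgl ind d (x # xs) = (d - ind x) + sgl ind (d - 1) xs"

definition sg :: "('x \<Rightarrow> int) \<Rightarrow> int \<Rightarrow> 'x list \<Rightarrow> int" where
 "sg ind d p = sgl ind d (butlast p)"

fun dsl :: "('x \<Rightarrow> int) \<Rightarrow> 'x list \<Rightarrow> int list" where
 "dsl ind (x # y # ys) = (ind x - ind y - 1) # dsl ind (y # ys)" | "dsl ind _ = []"

lemma length_mpth[simp]: "length (mpth m p) = length p - 1"
  by (induction m p rule: mpth.induct) auto

lemma nth_mpth: "j < length p - 1 \<Longrightarrow> mpth m p ! j = m (p!j) (p!Suc j)"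
  by (induction m p arbitrary: j rule: mpth.induct) (auto simp: nth_Cons split: nat.splits)

lemma length_dsl[simp]: "length (dsl ind p) = length p - 1"
  by (induction ind p rule: dsl.induct) auto

lemma nth_dsl: "j < length p - 1 \<Longrightarrow> dsl ind p ! j = ind (p!j) - ind (p!Suc j) - 1"
  by (induction ind p arbitrary: j rule: dsl.induct) (auto simp: nth_Cons split: nat.splits)

lemma sum_take_dsl: "j < length p \<Longrightarrow> sum_list (take j (dsl ind p)) = ind (hd p) - ind (p!j) - int j"
proof (induction ind p arbitrary: j rule: dsl.induct)
  case (1 ind x y ys)
  then show ?case by (cases j) auto
next
  case ("2_1" ind)
  then show ?case by simp
next
  case ("2_2" ind v)
  then show ?case by simp
qed

lemma mpth_Cons2: "ys \<noteq> [] \<Longrightarrow> mpth m (x # ys) = m x (hd ys) # mpth m ys"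
  by (cases ys) auto

lemma mpth_append: "xs \<noteq> [] \<Longrightarrow> ys \<noteq> [] \<Longrightarrow> mpth m (xs @ ys) = mpth m xs @ m (last xs) (hd ys) # mpth m ys"
proof (induction xs)
  case Nil then show ?case by simp
next
  case (Cons x xs)
  show ?case
  proof (cases "xs = []")
    case True then show ?thesis using Cons by (simp add: mpth_Cons2)
  next
    case False then show ?thesis using Cons by (simp add: mpth_Cons2)
  qed
qed

lemma mpth_snoc: "p \<noteq> [] \<Longrightarrow> mpth m (p @ [y]) = mpth m p @ [m (last p) y]"
  using mpth_append[of p "[y]" m] by simp

lemma mpth_drop: "mpth m (drop q p) = drop q (mpth m p)"
  by (rule nth_equalityI) (auto simp: nth_mpth)

lemma mpth_take: "q < length p \<Longrightarrow> mpth m (take (Suc q) p) = take q (mpth m p)"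
  by (rule nth_equalityI) (auto simp: nth_mpth)

lemma sgl_append: "sgl ind d (xs @ ys) = sgl ind d xs + sgl ind (d - int (length xs)) ys"
  by (induction xs arbitrary: d) (auto simp: algebra_simps)

lemma sgl_shift: "sgl ind (d + t) xs = sgl ind d xs + t * int (length xs)"
proof (induction xs arbitrary: d)
  case Nil then show ?case by simp
next
  case (Cons x xs)
  have "sgl ind (d - 1 + t) xs = sgl ind (d - 1) xs + t * int (length xs)" by (rule Cons)
  moreover have "d - 1 + t = d + t - 1" by simp
  ultimately show ?case by (simp add: algebra_simps)
qed


lemma addhom_zero: fixes G :: "'a::ab_group_add \<Rightarrow> 'b::ab_group_add" shows "(\<And>x y. G (x + y) = G x + G y) \<Longrightarrow> G 0 = (0::'b::ab_group_add)"
proof -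
  assume h: "\<And>x y. G (x + y) = G x + G y"
  have "G (0 + 0) = G 0 + G 0" by (rule h)
  then show ?thesis by simp
qed

lemma addhom_uminus: fixes G :: "'a::ab_group_add \<Rightarrow> 'b::ab_group_add" shows "(\<And>x y. G (x + y) = G x + G y) \<Longrightarrow> G (- x) = - (G x :: 'b::ab_group_add)"
proof -
  assume h: "\<And>x y. G (x + y) = G x + G y"
  have "G (x + - x) = G x + G (- x)" by (rule h)
  then have "G x + G (- x) = 0" using addhom_zero[of G, OF h] by simp
  then show ?thesis by (simp add: eq_neg_iff_add_eq_0 add.commute)
qed

lemma addhom_ks: fixes G :: "'a::ab_group_add \<Rightarrow> 'b::ab_group_add" shows "(\<And>x y. G (x + y) = G x + G y) \<Longrightarrow> G (ks e x) = ks e (G x :: 'b::ab_group_add)"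
  using addhom_uminus[of G x] by (simp add: ks_def)

lemma addhom_sum: fixes G :: "'a::ab_group_add \<Rightarrow> 'b::ab_group_add" shows "(\<And>x y. G (x + y) = G x + G y) \<Longrightarrow> G (sum f S) = (\<Sum>i\<in>S. G (f i) :: 'b::ab_group_add)"
proof -
  assume h: "\<And>x y. G (x + y) = G x + G y"
  show ?thesis
  proof (cases "finite S")
    case True then show ?thesis by (induction S rule: finite_induct) (auto simp: h addhom_zero[of G, OF h])
  next
    case False then show ?thesis by (simp add: addhom_zero[of G, OF h])
  qed
qed

definition slotlin :: "(nat \<Rightarrow> 'a::ab_group_add \<Rightarrow> 'c::ab_group_add list \<Rightarrow> 'b::ab_group_add) \<Rightarrow> bool" where
 "slotlin F \<longleftrightarrow> (\<forall>n\<ge>1. \<forall>a b gs. length gs = n - 1 \<longrightarrow> F n (a + b) gs = F n a gs + F n b gs)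
   \<and> (\<forall>n\<ge>1. \<forall>a gs i g h. length gs = n - 1 \<longrightarrow> i < length gs \<longrightarrow>
        F n a (gs[i := g + h]) = F n a (gs[i := g]) + F n a (gs[i := h]))"

context
  fixes F :: "nat \<Rightarrow> 'a::ab_group_add \<Rightarrow> 'c::ab_group_add list \<Rightarrow> 'b::ab_group_add"
  assumes sl: "slotlin F"
begin

lemma sl_add: "length gs = k \<Longrightarrow> F (Suc k) (a + b) gs = F (Suc k) a gs + F (Suc k) b gs"
  using sl unfolding slotlin_def by auto

lemma sl_zero: "length gs = k \<Longrightarrow> F (Suc k) 0 gs = 0"
  using addhom_zero[of "\<lambda>a. F (Suc k) a gs"] sl_add by blast

lemma sl_ks: "length gs = k \<Longrightarrow> F (Suc k) (ks e a) gs = ks e (F (Suc k) a gs)"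
  using addhom_ks[of "\<lambda>a. F (Suc k) a gs"] sl_add by blast

lemma sl_sum: "length gs = k \<Longrightarrow> F (Suc k) (sum f S) gs = (\<Sum>i\<in>S. F (Suc k) (f i) gs)"
  using addhom_sum[of "\<lambda>a. F (Suc k) a gs"] sl_add by blast

lemma sl_slot_add: "length gs = k \<Longrightarrow> i < k \<Longrightarrow>
   F (Suc k) a (gs[i := g + h]) = F (Suc k) a (gs[i := g]) + F (Suc k) a (gs[i := h])"
  using sl unfolding slotlin_def by auto

lemma sl_slot_ks: "length gs = k \<Longrightarrow> i < k \<Longrightarrow>
   F (Suc k) a (gs[i := ks e g]) = ks e (F (Suc k) a (gs[i := g]))"
  using addhom_ks[of "\<lambda>g. F (Suc k) a (gs[i := g])"] sl_slot_add by blast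

lemma sl_slot_sum: "length gs = k \<Longrightarrow> i < k \<Longrightarrow>
   F (Suc k) a (gs[i := sum f S]) = (\<Sum>j\<in>S. F (Suc k) a (gs[i := f j]))"
  using addhom_sum[of "\<lambda>g. F (Suc k) a (gs[i := g])"] sl_slot_add by blast

lemma sl_slot_zero: "length gs = k \<Longrightarrow> 0 \<in> set gs \<Longrightarrow> F (Suc k) a gs = 0"
proof -
  assume l: "length gs = k" and z: "0 \<in> set gs"
  then obtain i where i: "i < k" "gs ! i = 0" by (auto simp: in_set_conv_nth)
  then have "gs = gs[i := 0]" by (metis list_update_id)
  moreover have "F (Suc k) a (gs[i := 0]) = 0"
    using addhom_zero[of "\<lambda>g. F (Suc k) a (gs[i := g])"] sl_slot_add[OF l i(1)] by blast
  ultimately show ?thesis by simp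
qed

end

lemma fsum_eq: "(\<And>n. n > K \<Longrightarrow> f n = 0) \<Longrightarrow> fsum f = (\<Sum>n\<le>K. f n)"
proof -
  assume h: "\<And>n. n > K \<Longrightarrow> f n = 0"
  have s: "{n. f n \<noteq> 0} \<subseteq> {..K}" using h by (auto simp: not_le[symmetric])
  show ?thesis unfolding fsum_def
    by (rule sum.mono_neutral_left) (use s in auto)
qed

fun plist :: "'x list \<Rightarrow> nat \<Rightarrow> 'x list list" where
  "plist crit 0 = map (\<lambda>x. [x]) crit"
| "plist crit (Suc n) = concat (map (\<lambda>p. map (\<lambda>y. p @ [y]) crit) (plist crit n))"

lemma plist_Suc': "plist crit (Suc n) = map (\<lambda>(p, y). p @ [y]) (List.product (plist crit n) crit)"
  by (simp add: product_concat_map map_concat comp_def)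

lemma set_plist: "set (plist crit n) = {p. length p = Suc n \<and> set p \<subseteq> set crit}"
proof (induction n)
  case 0
  show ?case
  proof (rule set_eqI, rule iffI)
    fix p assume "p \<in> set (plist crit 0)" then show "p \<in> {p. length p = Suc 0 \<and> set p \<subseteq> set crit}" by auto
  next
    fix p assume "p \<in> {p. length p = Suc 0 \<and> set p \<subseteq> set crit}"
    then obtain x where "p = [x]" "x \<in> set crit" by (auto simp: length_Suc_conv)
    then show "p \<in> set (plist crit 0)" by auto
  qed
next
  case (Suc n)
  show ?case
  proof (rule set_eqI, rule iffI)
    fix p assume "p \<in> set (plist crit (Suc n))"
    then have "p \<in> (\<Union>q\<in>set (plist crit n). (\<lambda>y. q @ [y]) ` set crit)" by simp
    then obtain q where q: "q \<in> set (plist crit n)" "p \<in> (\<lambda>y. q @ [y]) ` set crit" by blast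
    then obtain y where "y \<in> set crit" "p = q @ [y]" by blast
    note this q(1)
    then show "p \<in> {p. length p = Suc (Suc n) \<and> set p \<subseteq> set crit}"
      using Suc.IH by simp
  next
    fix p assume a: "p \<in> {p. length p = Suc (Suc n) \<and> set p \<subseteq> set crit}"
    then have ne: "p \<noteq> []" by auto
    have "p = butlast p @ [last p]" using ne by simp
    moreover have "butlast p \<in> set (plist crit n)" using Suc a by (auto dest: in_set_butlastD)
    moreover have "last p \<in> set crit" using a ne by auto
    ultimately have "p \<in> (\<Union>q\<in>set (plist crit n). (\<lambda>y. q @ [y]) ` set crit)" by blast
    then show "p \<in> set (plist crit (Suc n))" by simp
  qed
qed

lemma distinct_plist: "distinct crit \<Longrightarrow> distinct (plist crit n)"
proof (induction n)
  case 0 then show ?case by (simp add: distinct_map inj_on_def)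
next
  case (Suc n)
  have "inj_on (\<lambda>(p, y). p @ [y]) (set (List.product (plist crit n) crit))"
    by (auto simp: inj_on_def)
  then show ?case using Suc by (simp only: plist_Suc' distinct_map distinct_product)
qed




definition TT :: "(nat \<Rightarrow> 'a \<Rightarrow> 'c list \<Rightarrow> 'b::ab_group_add) \<Rightarrow> 'x list \<Rightarrow> ('x \<Rightarrow> int)
    \<Rightarrow> ('x \<Rightarrow> 'x \<Rightarrow> 'c) \<Rightarrow> int \<Rightarrow> ('x \<Rightarrow> 'a::ab_group_add) \<Rightarrow> 'x \<Rightarrow> nat \<Rightarrow> 'b" where
  "TT F crit ind m d c z n = (\<Sum>p\<in>paths crit n z. F (Suc n) (ks (sg ind d p) (c (hd p))) (mpth m p))"

lemma sg_snoc: "length p = Suc n \<Longrightarrow> sg ind d (p @ [y]) = sg ind d p + (d - int n - ind (last p))"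
proof -
  assume l: "length p = Suc n"
  then have ne: "p \<noteq> []" by auto
  have "sg ind d (p @ [y]) = sgl ind d (butlast p @ [last p])" unfolding sg_def using ne by simp
  also have "\<dots> = sg ind d p + (d - int n - ind (last p))" unfolding sgl_append sg_def using l by simp
  finally show ?thesis .
qed

lemma mt_pow_eq: "mt_pow crit ind m n (start_list crit ind d c) =
   map (\<lambda>p. (d - ind (last p) - int n, ks (sg ind d p) (c (hd p)), mpth m p, last p)) (plist crit n)"
proof (induction n)
  case 0
  show ?case by (simp add: mt_pow_def start_list_def sg_def)
next
  case (Suc n)
  let ?g = "\<lambda>n p. (d - ind (last p) - int n, ks (sg ind d p) (c (hd p)), mpth m p, last p)"
  have "mt_pow crit ind m (Suc n) (start_list crit ind d c)
      = concat (map (mt_step crit ind m) (mt_pow crit ind m n (start_list crit ind d c)))"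
    by (simp add: mt_pow_def)
  also have "\<dots> = concat (map (\<lambda>p. mt_step crit ind m (?g n p)) (plist crit n))"
    by (simp add: Suc.IH comp_def)
  also have "\<dots> = concat (map (\<lambda>p. map (\<lambda>y. ?g (Suc n) (p @ [y])) crit) (plist crit n))"
  proof (rule arg_cong[where f = concat], rule map_cong[OF refl])
    fix p assume "p \<in> set (plist crit n)"
    then have l: "length p = Suc n" by (simp add: set_plist)
    then have ne: "p \<noteq> []" by auto
    show "mt_step crit ind m (?g n p) = map (\<lambda>y. ?g (Suc n) (p @ [y])) crit"
      unfolding mt_step_def using ne
      by (auto simp: sg_snoc[OF l] mpth_snoc ks_add algebra_simps)
  qed
  also have "\<dots> = map (?g (Suc n)) (plist crit (Suc n))"
    by (simp add: map_concat comp_def)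
  finally show ?case .
qed

lemma twisted_eq:
  assumes "distinct crit"
  shows "twisted F crit ind m d c z = fsum (TT F crit ind m d c z)"
proof -
  have "\<And>n. sum_list (map (\<lambda>(e, a, gs, x). if x = z then F (n + 1) a gs else 0)
       (mt_pow crit ind m n (start_list crit ind d c))) = TT F crit ind m d c z n"
  proof -
    fix n
    let ?h = "\<lambda>p. if last p = z then F (n + 1) (ks (sg ind d p) (c (hd p))) (mpth m p) else 0"
    have "sum_list (map (\<lambda>(e, a, gs, x). if x = z then F (n + 1) a gs else 0)
       (mt_pow crit ind m n (start_list crit ind d c))) = sum_list (map ?h (plist crit n))"
      by (simp add: mt_pow_eq comp_def)
    also have "\<dots> = sum ?h (set (plist crit n))"
      by (rule sum_list_distinct_conv_sum_set) (rule distinct_plist[OF assms])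
    also have "\<dots> = (\<Sum>p\<in>{p \<in> set (plist crit n). last p = z}. F (n + 1) (ks (sg ind d p) (c (hd p))) (mpth m p))"
      by (simp only: sum.inter_filter[OF finite_set])
    also have "{p \<in> set (plist crit n). last p = z} = paths crit n z"
      by (auto simp: set_plist paths_def)
    finally show "?thesis n" unfolding TT_def Suc_eq_plus1 .
  qed
  then show ?thesis unfolding twisted_def by simp
qed

locale tw =
  fixes GC :: "int \<Rightarrow> 'c::ab_group_add set" and mu1 :: "'c \<Rightarrow> 'c" and mu2 :: "'c \<Rightarrow> 'c \<Rightarrow> 'c"
    and crit :: "'x list" and ind :: "'x \<Rightarrow> int" and m :: "'x \<Rightarrow> 'x \<Rightarrow> 'c"
  assumes dga: "dga GC mu1 mu2" and tc: "twisting_cocycle GC mu1 mu2 crit ind m"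
begin

lemma dist: "distinct crit" using tc unfolding twisting_cocycle_def by simp

lemma m_deg: "x \<in> set crit \<Longrightarrow> y \<in> set crit \<Longrightarrow> m x y \<in> GC (ind x - ind y - 1)"
  using tc unfolding twisting_cocycle_def by simp

lemma m_nz: "x \<in> set crit \<Longrightarrow> y \<in> set crit \<Longrightarrow> m x y \<noteq> 0 \<Longrightarrow> ind y < ind x"
proof (rule ccontr)
  assume a: "x \<in> set crit" "y \<in> set crit" "m x y \<noteq> 0" "\<not> ind y < ind x"
  then have "ind x - ind y - 1 < 0" by simp
  then have "GC (ind x - ind y - 1) = {0}" using dga unfolding dga_def by simp
  then show False using m_deg[OF a(1,2)] a(3) by simp
qed

definition K0 where "K0 = card (ind ` set crit)"

lemma zero_edge:
  assumes p: "p \<in> paths crit n z" and nK: "K0 \<le> n"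
  shows "0 \<in> set (mpth m p)"
proof (rule ccontr)
  assume nz: "0 \<notin> set (mpth m p)"
  have l: "length p = Suc n" and sp: "set p \<subseteq> set crit" using p by (auto simp: paths_def)
  have dec: "ind (p ! Suc j) < ind (p ! j)" if "j < n" for j
  proof -
    have "mpth m p ! j \<in> set (mpth m p)" using that l by (simp add: nth_mem)
    then have "m (p!j) (p!Suc j) \<noteq> 0" using nz nth_mpth[of j p m] that l by auto
    moreover have "p!j \<in> set crit" "p ! Suc j \<in> set crit" using sp l that by (auto simp: nth_mem subsetD)
    ultimately show ?thesis using m_nz by blast
  qed
  have dec2: "ind (p ! j) < ind (p ! i)" if "i < j" "j \<le> n" for i j
    using that
  proof (induction j)
    case 0 then show ?case by simp
  next
    case (Suc j)
    show ?case
    proof (cases "i = j")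
      case True then show ?thesis using dec Suc by simp
    next
      case False then have "ind (p ! j) < ind (p ! i)" using Suc by simp
      then show ?thesis using dec[of j] Suc by simp
    qed
  qed
  have inj: "inj_on (\<lambda>j. ind (p ! j)) {..n}"
  proof (rule inj_onI)
    fix i j assume "i \<in> {..n}" "j \<in> {..n}" "ind (p ! i) = ind (p ! j)"
    then show "i = j" using dec2[of i j] dec2[of j i] by (metis atMost_iff less_irrefl linorder_neqE_nat)
  qed
  have "(\<lambda>j. ind (p ! j)) ` {..n} \<subseteq> ind ` set crit"
    using sp l by (auto intro!: imageI simp: nth_mem subsetD)
  then have "card ((\<lambda>j. ind (p ! j)) ` {..n}) \<le> K0" unfolding K0_def by (rule card_mono[rotated]) simp
  then have "Suc n \<le> K0" using card_image[OF inj] by simp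
  then show False using nK by simp
qed

lemma TT_vanish:
  assumes "slotlin F" "K0 \<le> n"
  shows "TT F crit ind m d c z n = 0"
  unfolding TT_def
proof (rule sum.neutral, rule ballI)
  fix p assume p: "p \<in> paths crit n z"
  have "length (mpth m p) = n" using p by (simp add: paths_def)
  then show "F (Suc n) (ks (sg ind d p) (c (hd p))) (mpth m p) = 0"
    using sl_slot_zero[OF assms(1)] zero_edge[OF p assms(2)] by blast
qed

lemma twisted_sum:
  assumes "slotlin F" "K0 \<le> K"
  shows "twisted F crit ind m d c z = (\<Sum>n\<le>K. TT F crit ind m d c z n)"
  unfolding twisted_eq[OF dist] using TT_vanish[OF assms(1)] assms(2)
  by (intro fsum_eq) simp

end



lemma drop_last1: "length Q = Suc q \<Longrightarrow> drop q Q = [last Q]"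
  by (cases Q rule: rev_cases) auto

lemma split_paths:
  "(\<Sum>R\<in>paths crit k z. \<Sum>Q\<in>paths crit q (hd R). h Q R) =
   (\<Sum>P\<in>paths crit (q + k) z. h (take (Suc q) P) (drop q P))"
proof -
  have "(\<Sum>R\<in>paths crit k z. \<Sum>Q\<in>paths crit q (hd R). h Q R) =
     (\<Sum>(R, Q)\<in>(SIGMA R:paths crit k z. paths crit q (hd R)). h Q R)"
    by (rule sum.Sigma) (auto simp: finite_paths)
  also have "\<dots> = (\<Sum>P\<in>paths crit (q + k) z. h (take (Suc q) P) (drop q P))"
  proof (rule sum.reindex_bij_witness[where j = "\<lambda>(R, Q). Q @ tl R" and i = "\<lambda>P. (drop q P, take (Suc q) P)"])
    fix a assume a: "a \<in> (SIGMA R:paths crit k z. paths crit q (hd R))"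
    obtain R Q where a': "a = (R, Q)" by (cases a)
    have R: "length R = Suc k" "set R \<subseteq> set crit" "last R = z" and
         Q: "length Q = Suc q" "set Q \<subseteq> set crit" "last Q = hd R" using a a' by (auto simp: paths_def)
    have dq: "drop q (Q @ tl R) = R"
      using drop_last1[OF Q(1)] Q(1,3) R(1) by (cases R) auto
    have tq: "take (Suc q) (Q @ tl R) = Q" using Q(1) by simp
    show "(\<lambda>P. (drop q P, take (Suc q) P)) ((\<lambda>(R, Q). Q @ tl R) a) = a"
      using dq tq a' by simp
    show "h (take (Suc q) ((\<lambda>(R, Q). Q @ tl R) a)) (drop q ((\<lambda>(R, Q). Q @ tl R) a)) = (case a of (R, Q) \<Rightarrow> h Q R)"
      using dq tq a' by simp
    have "last (Q @ tl R) = z"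
    proof (cases "tl R = []")
      case True
      then have "R = [hd R]" using R(1) by (cases R) auto
      then show ?thesis using True Q(3) R(3) by (metis append_Nil2 last.simps)
    next
      case False
      then show ?thesis using R(3) by (cases R) auto
    qed
    moreover have "set (tl R) \<subseteq> set crit" using R(2) by (cases R) auto
    ultimately show "(\<lambda>(R, Q). Q @ tl R) a \<in> paths crit (q + k) z"
      using Q R a' by (auto simp: paths_def)
  next
    fix P assume P: "P \<in> paths crit (q + k) z"
    have l: "length P = Suc (q + k)" "set P \<subseteq> set crit" "last P = z" using P by (auto simp: paths_def)
    show "(\<lambda>(R, Q). Q @ tl R) (drop q P, take (Suc q) P) = P"
      by (simp add: tl_drop) (metis append_take_drop_id drop_Suc)
    have "last (take (Suc q) P) = P ! q" using l(1) by (subst last_conv_nth) (auto simp: min_def)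
    moreover have "hd (drop q P) = P ! q" using l(1) by (simp add: hd_drop_conv_nth)
    moreover have "last (drop q P) = z" using l by simp
    ultimately show "(drop q P, take (Suc q) P) \<in> (SIGMA R:paths crit k z. paths crit q (hd R))"
      using l by (auto simp: paths_def dest: in_set_takeD in_set_dropD)
  qed
  finally show ?thesis .
qed

lemma sg_split:
  assumes l: "length P = Suc (q + k)"
  shows "sg ind d' (drop q P) + sg ind d (take (Suc q) P) = sg ind d P + int (k * q) + int k * (d' - d)"
proof -
  define L where "L = drop q (butlast P)"
  have bt: "butlast (take (Suc q) P) = take q P" using l by (simp add: butlast_take)
  have bd: "butlast (drop q P) = L" unfolding L_def by (simp add: butlast_drop)
  have tb: "take q (butlast P) = take q P" using l by (simp add: take_butlast)
  have bP: "butlast P = take q P @ L" unfolding L_def using tb by (metis append_take_drop_id)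
  have lL: "length L = k" unfolding L_def using l by simp
  have lt: "length (take q P) = q" using l by simp
  have e1: "sg ind d P = sgl ind d (take q P) + sgl ind (d - int q) L"
    unfolding sg_def bP sgl_append lt ..
  have e2: "sg ind d' (drop q P) = sgl ind (d - int q) L + (d' - d + int q) * int k"
    unfolding sg_def bd using sgl_shift[of ind "d - int q" "d' - d + int q" L] lL by simp
  have e3: "sg ind d (take (Suc q) P) = sgl ind d (take q P)" by (simp add: sg_def bt)
  show ?thesis using e1 e2 e3 by (simp add: algebra_simps)
qed

context tw begin

lemma comp_twisted:
  assumes s1: "slotlin F1" and s2: "slotlin F2" and K: "K0 \<le> K"
  shows "twisted F1 crit ind m d' (twisted F2 crit ind m d c) z =
    (\<Sum>n\<le>K. \<Sum>P\<in>paths crit n z. ks (sg ind d P) (\<Sum>q\<le>n. ks (int ((n - q) * q) + int (n - q) * (d' - d))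
        (F1 (Suc (n - q)) (F2 (Suc q) (c (hd P)) (take q (mpth m P))) (drop q (mpth m P)))))"
proof -
  define b where "b = twisted F2 crit ind m d c"
  define G where "G q k P = ks (sg ind d P + int (k * q) + int k * (d' - d))
     (F1 (Suc k) (F2 (Suc q) (c (hd P)) (take q (mpth m P))) (drop q (mpth m P)))" for q k P
  define g where "g q k = (\<Sum>P\<in>paths crit (q + k) z. G q k P)" for q k
  have b: "b y = (\<Sum>q\<le>K. \<Sum>Q\<in>paths crit q y. ks (sg ind d Q) (F2 (Suc q) (c (hd Q)) (mpth m Q)))" for y
    unfolding b_def twisted_sum[OF s2 K] TT_def
    by (intro sum.cong refl) (auto simp: paths_def intro!: sl_ks[OF s2])
  have "twisted F1 crit ind m d' b z = (\<Sum>k\<le>K. \<Sum>R\<in>paths crit k z. F1 (Suc k) (ks (sg ind d' R) (b (hd R))) (mpth m R))"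
    unfolding twisted_sum[OF s1 K] TT_def ..
  also have "\<dots> = (\<Sum>k\<le>K. \<Sum>R\<in>paths crit k z. \<Sum>q\<le>K. \<Sum>Q\<in>paths crit q (hd R).
      ks (sg ind d' R + sg ind d Q) (F1 (Suc k) (F2 (Suc q) (c (hd Q)) (mpth m Q)) (mpth m R)))"
  proof (intro sum.cong refl)
    fix k R assume R: "R \<in> paths crit k z"
    then have lR: "length (mpth m R) = k" by (simp add: paths_def)
    show "F1 (Suc k) (ks (sg ind d' R) (b (hd R))) (mpth m R) = (\<Sum>q\<le>K. \<Sum>Q\<in>paths crit q (hd R).
      ks (sg ind d' R + sg ind d Q) (F1 (Suc k) (F2 (Suc q) (c (hd Q)) (mpth m Q)) (mpth m R)))"
      unfolding b by (simp add: sl_ks[OF s1 lR] sl_sum[OF s1 lR] ks_sum ks_add)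
  qed
  also have "\<dots> = (\<Sum>k\<le>K. \<Sum>q\<le>K. g q k)"
  proof (intro sum.cong refl)
    fix k
    have "(\<Sum>R\<in>paths crit k z. \<Sum>q\<le>K. \<Sum>Q\<in>paths crit q (hd R).
      ks (sg ind d' R + sg ind d Q) (F1 (Suc k) (F2 (Suc q) (c (hd Q)) (mpth m Q)) (mpth m R)))
      = (\<Sum>q\<le>K. \<Sum>R\<in>paths crit k z. \<Sum>Q\<in>paths crit q (hd R).
      ks (sg ind d' R + sg ind d Q) (F1 (Suc k) (F2 (Suc q) (c (hd Q)) (mpth m Q)) (mpth m R)))"
      by (rule sum.swap)
    also have "\<dots> = (\<Sum>q\<le>K. g q k)"
    proof (intro sum.cong refl)
      fix q
      show "(\<Sum>R\<in>paths crit k z. \<Sum>Q\<in>paths crit q (hd R).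
      ks (sg ind d' R + sg ind d Q) (F1 (Suc k) (F2 (Suc q) (c (hd Q)) (mpth m Q)) (mpth m R))) = g q k"
        unfolding split_paths g_def
      proof (intro sum.cong refl)
        fix P assume P: "P \<in> paths crit (q + k) z"
        then have l: "length P = Suc (q + k)" by (simp add: paths_def)
        have "hd (take (Suc q) P) = hd P" using l by (cases P) auto
        moreover have "mpth m (take (Suc q) P) = take q (mpth m P)" using l by (simp add: mpth_take)
        moreover note mpth_drop[of m q P] sg_split[OF l, of ind d' d]
        ultimately show "ks (sg ind d' (drop q P) + sg ind d (take (Suc q) P))
          (F1 (Suc k) (F2 (Suc q) (c (hd (take (Suc q) P))) (mpth m (take (Suc q) P))) (mpth m (drop q P))) = G q k P"
          unfolding G_def by simp
      qed
    qed
    finally show "(\<Sum>R\<in>paths crit k z. \<Sum>q\<le>K. \<Sum>Q\<in>paths crit q (hd R).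
      ks (sg ind d' R + sg ind d Q) (F1 (Suc k) (F2 (Suc q) (c (hd Q)) (mpth m Q)) (mpth m R))) = (\<Sum>q\<le>K. g q k)" .
  qed
  also have "\<dots> = (\<Sum>q\<le>K. \<Sum>k\<le>K. g q k)" by (rule sum.swap)
  also have "\<dots> = (\<Sum>(q, k)\<in>{..K} \<times> {..K}. g q k)" by (rule sum.cartesian_product)
  also have "\<dots> = (\<Sum>(q, k)\<in>{(q, k). q + k \<le> K}. g q k)"
  proof (rule sum.mono_neutral_right)
    show "finite ({..K} \<times> {..K})" by simp
    show "{(q, k). q + k \<le> K} \<subseteq> {..K} \<times> {..K}" by auto
    show "\<forall>i\<in>{..K} \<times> {..K} - {(q, k). q + k \<le> K}. (case i of (q, k) \<Rightarrow> g q k) = 0"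
    proof
      fix i assume i: "i \<in> {..K} \<times> {..K} - {(q, k). q + k \<le> K}"
      obtain q k where qk: "i = (q, k)" by (cases i)
      have big: "K0 \<le> q + k" using i qk K by auto
      have "g q k = 0" unfolding g_def
      proof (rule sum.neutral, rule ballI)
        fix P assume P: "P \<in> paths crit (q + k) z"
        have lm: "length (mpth m P) = q + k" using P by (simp add: paths_def)
        have z: "0 \<in> set (mpth m P)" by (rule zero_edge[OF P big])
        have lt: "length (take q (mpth m P)) = q" and ld: "length (drop q (mpth m P)) = k" using lm by auto
        have "0 \<in> set (take q (mpth m P)) \<or> 0 \<in> set (drop q (mpth m P))"
          using z by (metis Un_iff append_take_drop_id set_append)
        then have "F1 (Suc k) (F2 (Suc q) (c (hd P)) (take q (mpth m P))) (drop q (mpth m P)) = 0"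
        proof
          assume "0 \<in> set (take q (mpth m P))"
          then have "F2 (Suc q) (c (hd P)) (take q (mpth m P)) = 0" by (rule sl_slot_zero[OF s2 lt])
          then show ?thesis using sl_zero[OF s1 ld] by simp
        next
          assume "0 \<in> set (drop q (mpth m P))"
          then show ?thesis by (rule sl_slot_zero[OF s1 ld])
        qed
        then show "G q k P = 0" unfolding G_def by simp
      qed
      then show "(case i of (q, k) \<Rightarrow> g q k) = 0" using qk by simp
    qed
  qed
  also have "\<dots> = (\<Sum>n\<le>K. \<Sum>q\<le>n. g q (n - q))" by (rule sum.triangle_reindex_eq)
  also have "\<dots> = (\<Sum>n\<le>K. \<Sum>P\<in>paths crit n z. ks (sg ind d P) (\<Sum>q\<le>n. ks (int ((n - q) * q) + int (n - q) * (d' - d))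
        (F1 (Suc (n - q)) (F2 (Suc q) (c (hd P)) (take q (mpth m P))) (drop q (mpth m P)))))"
  proof (intro sum.cong refl)
    fix n
    have "(\<Sum>q\<le>n. g q (n - q)) = (\<Sum>q\<le>n. \<Sum>P\<in>paths crit n z. G q (n - q) P)"
      unfolding g_def by (intro sum.cong refl) simp
    also have "\<dots> = (\<Sum>P\<in>paths crit n z. \<Sum>q\<le>n. G q (n - q) P)" by (rule sum.swap)
    also have "\<dots> = (\<Sum>P\<in>paths crit n z. ks (sg ind d P) (\<Sum>q\<le>n. ks (int ((n - q) * q) + int (n - q) * (d' - d))
        (F1 (Suc (n - q)) (F2 (Suc q) (c (hd P)) (take q (mpth m P))) (drop q (mpth m P)))))"
      unfolding G_def ks_sum ks_add by (simp add: add.assoc)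
    finally show "(\<Sum>q\<le>n. g q (n - q)) = \<dots>" .
  qed
  finally show ?thesis unfolding b_def .
qed

end



lemma sum_Suc_shift: "(\<Sum>s\<in>{1..Suc n}. f s) = (\<Sum>q\<le>n. f (Suc q))"
  using sum.shift_bounds_cl_Suc_ivl[of f 0 n] by (simp add: atLeast0AtMost)

lemma replace_mu_len: "1 \<le> r \<Longrightarrow> r + s \<le> Suc (length gs) \<Longrightarrow>
    length (replace_mu mu1 mu2 r s gs) = Suc (length gs) - s"
  unfolding replace_mu_def by simp

lemma replace_mu_1: "1 \<le> r \<Longrightarrow> r \<le> length gs \<Longrightarrow>
    replace_mu mu1 mu2 r 1 gs = gs[r - 1 := mu1 (gs ! (r - 1))]"
  unfolding replace_mu_def mu_def
  by (simp add: upd_conv_take_nth_drop hd_drop_conv_nth take_Suc_conv_app_nth)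

lemma replace_mu_2: "length A = r - 1 \<Longrightarrow> 1 \<le> r \<Longrightarrow>
    replace_mu mu1 mu2 r 2 (A @ a # b # B) = A @ mu2 a b # B"
  unfolding replace_mu_def mu_def by simp

locale tw2 = tw GC mu1 mu2 crit ind m
  for GC :: "int \<Rightarrow> 'c::ab_group_add set" and mu1 mu2 crit and ind :: "'x \<Rightarrow> int" and m +
  fixes GA :: "int \<Rightarrow> 'a::ab_group_add set" and nuA :: "nat \<Rightarrow> 'a \<Rightarrow> 'c list \<Rightarrow> 'a"
    and GB :: "int \<Rightarrow> 'b::ab_group_add set" and nuB :: "nat \<Rightarrow> 'b \<Rightarrow> 'c list \<Rightarrow> 'b"
    and phi :: "nat \<Rightarrow> 'a \<Rightarrow> 'c list \<Rightarrow> 'b" and d :: int and c :: "'x \<Rightarrow> 'a"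
  assumes modA: "ainf_module GC mu1 mu2 GA nuA" and modB: "ainf_module GC mu1 mu2 GB nuB"
    and mor: "ainf_morphism GC mu1 mu2 GA nuA GB nuB phi"
    and cdeg: "\<forall>x\<in>set crit. c x \<in> GA (d - ind x)"
begin

lemma slA: "slotlin nuA" using modA unfolding ainf_module_def slotlin_def by blast
lemma slB: "slotlin nuB" using modB unfolding ainf_module_def slotlin_def by blast
lemma slP: "slotlin phi" using mor unfolding ainf_morphism_def slotlin_def by blast

lemma mu1_add: "mu1 (x + y) = mu1 x + mu1 y" using dga unfolding dga_def by blast
lemma mu1_0: "mu1 0 = 0" using addhom_zero[of mu1] mu1_add by blast
lemma mu2_addl: "mu2 (x + y) z = mu2 x z + mu2 y z" using dga unfolding dga_def by blast
lemma mu2_addr: "mu2 z (x + y) = mu2 z x + mu2 z y" using dga unfolding dga_def by blast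
lemma mu2_0l: "mu2 0 z = 0" using addhom_zero[of "\<lambda>x. mu2 x z"] mu2_addl by blast
lemma mu2_0r: "mu2 z 0 = 0" using addhom_zero[of "\<lambda>x. mu2 z x"] mu2_addr by blast

lemma cocycle: "x \<in> set crit \<Longrightarrow> y \<in> set crit \<Longrightarrow>
   mu1 (m x y) = (\<Sum>w\<in>set crit. ks (ind x - ind w) (mu2 (m x w) (m w y)))"
  using tc dist unfolding twisting_cocycle_def by (simp add: sum_list_distinct_conv_sum_set)

definition jt :: "'x list \<Rightarrow> nat \<Rightarrow> nat \<Rightarrow> 'b" where
  "jt P r s = ks (int (r + s * (length P - r - s)))
     (ks ((int s - 2) * ((d - ind (hd P)) + sum_list (take (r - 1) (dsl ind P))))
       (phi (length P - s + 1) (c (hd P)) (replace_mu mu1 mu2 r s (mpth m P))))"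

lemma hom_list_P: "set P \<subseteq> set crit \<Longrightarrow> hom_list GC (mpth m P) (dsl ind P)"
  unfolding hom_list_def
proof (intro conjI allI impI)
  assume s: "set P \<subseteq> set crit"
  show "length (mpth m P) = length (dsl ind P)" by simp
  fix i assume i: "i < length (mpth m P)"
  then have "P ! i \<in> set crit" "P ! Suc i \<in> set crit" using s by (auto intro!: subsetD[OF s] nth_mem)
  then show "mpth m P ! i \<in> GC (dsl ind P ! i)"
    using i by (simp add: nth_mpth nth_dsl m_deg)
qed

lemma morph_P:
  assumes P: "P \<in> paths crit n z"
  shows "(\<Sum>s\<in>{1..Suc n}. ks (int (s * (Suc n - s)))
            (phi (Suc n - s + 1) (nuA s (c (hd P)) (take (s - 1) (mpth m P))) (drop (s - 1) (mpth m P))))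
       + (\<Sum>r\<in>{1..Suc n}. \<Sum>s\<in>{1..Suc n - r}. jt P r s)
       = (\<Sum>s\<in>{1..Suc n}. ks (int ((s + 1) * (Suc n - s)))
            (nuB (Suc n - s + 1) (phi s (c (hd P)) (take (s - 1) (mpth m P))) (drop (s - 1) (mpth m P))))"
proof -
  have l: "length P = Suc n" and s: "set P \<subseteq> set crit" using P by (auto simp: paths_def)
  have h: "hd P \<in> set crit" using l s by (cases P) auto
  have a: "c (hd P) \<in> GA (d - ind (hd P))" using cdeg h by blast
  have lg: "length (mpth m P) = Suc n - 1" using l by simp
  have M: "\<forall>N\<ge>1. \<forall>a d gs ds. a \<in> GA d \<longrightarrow> hom_list GC gs ds \<longrightarrow> length gs = N - 1 \<longrightarrow>
        (\<Sum>s\<in>{1..N}. ks (int (s * (N - s)))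
            (phi (N - s + 1) (nuA s a (take (s - 1) gs)) (drop (s - 1) gs)))
      + (\<Sum>r\<in>{1..N}. \<Sum>s\<in>{1..N - r}. ks (int (r + s * (N - r - s)))
            (ks ((int s - 2) * (d + sum_list (take (r - 1) ds)))
               (phi (N - s + 1) a (replace_mu mu1 mu2 r s gs))))
      = (\<Sum>s\<in>{1..N}. ks (int ((s + 1) * (N - s)))
            (nuB (N - s + 1) (phi s a (take (s - 1) gs)) (drop (s - 1) gs)))"
    using mor unfolding ainf_morphism_def by blast
  from M[rule_format, of "Suc n", OF _ a hom_list_P[OF s] lg]
  show ?thesis unfolding jt_def l by simp
qed

lemma jt_vanish: "length P = Suc n \<Longrightarrow> 1 \<le> r \<Longrightarrow> 3 \<le> s \<Longrightarrow> r + s \<le> Suc n \<Longrightarrow> jt P r s = 0"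
proof -
  assume l: "length P = Suc n" and r: "1 \<le> r" and s: "3 \<le> s" and rs: "r + s \<le> Suc n"
  have lg: "length (mpth m P) = n" using l by simp
  have len: "length (replace_mu mu1 mu2 r s (mpth m P)) = Suc n - s"
    using replace_mu_len[OF r, of s "mpth m P"] rs lg by simp
  have "0 \<in> set (replace_mu mu1 mu2 r s (mpth m P))"
    using s unfolding replace_mu_def mu_def by simp
  then have "phi (Suc (Suc n - s)) (c (hd P)) (replace_mu mu1 mu2 r s (mpth m P)) = 0"
    by (rule sl_slot_zero[OF slP len])
  moreover have "length P - s + 1 = Suc (Suc n - s)" using l by simp
  ultimately show ?thesis unfolding jt_def by simp
qed

lemma junk_split:
  assumes l: "length P = Suc n"
  shows "(\<Sum>r\<in>{1..Suc n}. \<Sum>s\<in>{1..Suc n - r}. jt P r s) = (\<Sum>r\<in>{1..n}. jt P r 1) + (\<Sum>r\<in>{1..n - 1}. jt P r 2)"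
proof -
  have inner: "(\<Sum>s\<in>{1..Suc n - r}. jt P r s) = (if 1 \<le> Suc n - r then jt P r 1 else 0) + (if 2 \<le> Suc n - r then jt P r 2 else 0)"
    if r: "r \<in> {1..Suc n}" for r
  proof -
    have "(\<Sum>s\<in>{1..Suc n - r}. jt P r s) = (\<Sum>s\<in>{1..Suc n - r}. (if s = 1 then jt P r 1 else 0) + (if s = 2 then jt P r 2 else 0))"
    proof (rule sum.cong[OF refl])
      fix s assume "s \<in> {1..Suc n - r}"
      then show "jt P r s = (if s = 1 then jt P r 1 else 0) + (if s = 2 then jt P r 2 else 0)"
        using jt_vanish[OF l, of r s] r by auto
    qed
    also have "\<dots> = (if 1 \<le> Suc n - r then jt P r 1 else 0) + (if 2 \<le> Suc n - r then jt P r 2 else 0)"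
      by (simp add: sum.distrib)
    finally show ?thesis .
  qed
  have "(\<Sum>r\<in>{1..Suc n}. \<Sum>s\<in>{1..Suc n - r}. jt P r s) =
      (\<Sum>r\<in>{1..Suc n}. if 1 \<le> Suc n - r then jt P r 1 else 0) + (\<Sum>r\<in>{1..Suc n}. if 2 \<le> Suc n - r then jt P r 2 else 0)"
    unfolding sum.distrib[symmetric] by (rule sum.cong[OF refl]) (rule inner)
  also have "(\<Sum>r\<in>{1..Suc n}. if 1 \<le> Suc n - r then jt P r 1 else 0) = (\<Sum>r\<in>{1..n}. jt P r 1)"
    by (simp add: sum.inter_filter[symmetric]) (rule sum.cong, auto)
  also have "(\<Sum>r\<in>{1..Suc n}. if 2 \<le> Suc n - r then jt P r 2 else 0) = (\<Sum>r\<in>{1..n - 1}. jt P r 2)"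
    by (simp add: sum.inter_filter[symmetric]) (rule sum.cong, auto)
  finally show ?thesis .
qed

end



context tw2 begin

lemma ins_facts:
  assumes P: "P \<in> paths crit n z" and y: "y \<in> set crit" and r: "1 \<le> r" "r \<le> n"
  shows "take r P @ y # drop r P \<in> paths crit (Suc n) z"
    and "hd (take r P @ y # drop r P) = hd P"
    and "mpth m (take r P @ y # drop r P) = take (r - 1) (mpth m P) @ m (P ! (r - 1)) y # m y (P ! r) # drop r (mpth m P)"
    and "sg ind d (take r P @ y # drop r P) = sg ind d P + d - ind y - int n"
proof -
  have l: "length P = Suc n" and s: "set P \<subseteq> set crit" and la: "last P = z" using P by (auto simp: paths_def)
  have dne: "drop r P \<noteq> []" using l r by simp
  have tne: "take r P \<noteq> []" using l r by (cases P) auto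
  show "take r P @ y # drop r P \<in> paths crit (Suc n) z"
    using l s y dne la r by (auto simp: paths_def dest: in_set_takeD in_set_dropD)
  show "hd (take r P @ y # drop r P) = hd P" using tne by (cases P) auto
  have lt: "last (take r P) = P ! (r - 1)" using l r by (subst last_conv_nth) (auto simp: tne min_def)
  have mt: "mpth m (take r P) = take (r - 1) (mpth m P)"
    using mpth_take[of "r - 1" P m] l r by simp
  have hdr: "hd (drop r P) = P ! r" using l r by (simp add: hd_drop_conv_nth)
  show "mpth m (take r P @ y # drop r P) = take (r - 1) (mpth m P) @ m (P ! (r - 1)) y # m y (P ! r) # drop r (mpth m P)"
    unfolding mpth_append[OF tne list.distinct(2)[symmetric, of y "drop r P", THEN not_sym]]
    using mt lt hdr mpth_Cons2[OF dne, of m y] mpth_drop[of m r P] by simp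
  define L where "L = drop r (butlast P)"
  have lL: "length L = n - r" unfolding L_def using l by simp
  have bd: "butlast (drop r P) = L" unfolding L_def by (simp add: butlast_drop)
  have b1: "butlast (take r P @ y # drop r P) = take r P @ y # L"
    using dne bd by (simp add: butlast_append)
  have tb: "take r (butlast P) = take r P" using l r by (simp add: take_butlast)
  have b2: "butlast P = take r P @ L" unfolding L_def using tb by (metis append_take_drop_id)
  have ltr: "length (take r P) = r" using l r by simp
  have e1: "sg ind d (take r P @ y # drop r P) = sgl ind d (take r P) + (d - int r - ind y) + sgl ind (d - int r - 1) L"
    unfolding sg_def b1 sgl_append ltr by simp
  have e2: "sg ind d P = sgl ind d (take r P) + sgl ind (d - int r - 1) L + int (n - r)"
    unfolding sg_def b2 sgl_append ltr using sgl_shift[of ind "d - int r - 1" 1 L] lL by simp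
  show "sg ind d (take r P @ y # drop r P) = sg ind d P + d - ind y - int n"
    using e1 e2 r by simp
qed

lemma jt1_expand:
  assumes P: "P \<in> paths crit n z" and r: "1 \<le> r" "r \<le> n"
  shows "jt P r 1 = (\<Sum>y\<in>set crit. ks (int (r + (Suc n - r - 1)) + (-1) * ((d - ind (hd P)) + (ind (hd P) - ind (P ! (r - 1)) - int (r - 1))) + (ind (P ! (r - 1)) - ind y))
      (phi (Suc n) (c (hd P)) ((mpth m P)[r - 1 := mu2 (m (P ! (r - 1)) y) (m y (P ! r))])))"
proof -
  have l: "length P = Suc n" and s: "set P \<subseteq> set crit" using P by (auto simp: paths_def)
  have lg: "length (mpth m P) = n" using l by simp
  have i: "r - 1 < n" using r by simp
  have x1: "P ! (r - 1) \<in> set crit" "P ! r \<in> set crit" using l r s by (auto intro!: subsetD[OF s] nth_mem)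
  have g: "mpth m P ! (r - 1) = m (P ! (r - 1)) (P ! r)" using nth_mpth[of "r - 1" P m] l r by simp
  have st: "sum_list (take (r - 1) (dsl ind P)) = ind (hd P) - ind (P ! (r - 1)) - int (r - 1)"
    using sum_take_dsl[of "r - 1" P ind] l r by simp
  have ln: "length P - 1 + 1 = Suc n" using l by simp
  have ph: "phi (Suc n) (c (hd P)) ((mpth m P)[r - 1 := (\<Sum>w\<in>set crit. ks (ind (P ! (r - 1)) - ind w) (mu2 (m (P ! (r - 1)) w) (m w (P ! r))))])
     = (\<Sum>w\<in>set crit. ks (ind (P ! (r - 1)) - ind w) (phi (Suc n) (c (hd P)) ((mpth m P)[r - 1 := mu2 (m (P ! (r - 1)) w) (m w (P ! r))])))"
    by (simp only: sl_slot_sum[OF slP lg i] sl_slot_ks[OF slP lg i])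
  have j: "jt P r 1 = ks (int (r + 1 * (Suc n - r - 1))) (ks ((int 1 - 2) * ((d - ind (hd P)) + (ind (hd P) - ind (P ! (r - 1)) - int (r - 1))))
      (phi (Suc n) (c (hd P)) ((mpth m P)[r - 1 := mu1 (mpth m P ! (r - 1))])))"
    unfolding jt_def st replace_mu_1[OF r(1) r(2)[folded lg]] using l by simp
  show ?thesis
    unfolding j g cocycle[OF x1] ph
    by (simp add: ks_sum ks_add algebra_simps)
qed


lemma jt2_form:
  assumes P: "P \<in> paths crit (Suc n) z" and r: "1 \<le> r" "r \<le> n"
  shows "jt P r 2 = ks (int (r + 2 * (Suc (Suc n) - r - 2))) (phi (Suc n) (c (hd P)) (replace_mu mu1 mu2 r 2 (mpth m P)))"
proof -
  have l: "length P = Suc (Suc n)" using P by (simp add: paths_def)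
  show ?thesis unfolding jt_def l by simp
qed

lemma pair:
  assumes r: "1 \<le> r" "r \<le> n"
  shows "(\<Sum>P\<in>paths crit n z. ks (sg ind d P) (jt P r 1)) + (\<Sum>P\<in>paths crit (Suc n) z. ks (sg ind d P) (jt P r 2)) = 0"
proof -
  define X where "X P y = phi (Suc n) (c (hd P)) ((mpth m P)[r - 1 := mu2 (m (P ! (r - 1)) y) (m y (P ! r))])" for P y
  define E1 where "E1 P y = sg ind d P + (int (r + (Suc n - r - 1)) + (-1) * ((d - ind (hd P)) + (ind (hd P) - ind (P ! (r - 1)) - int (r - 1))) + (ind (P ! (r - 1)) - ind y))" for P y
  have "(\<Sum>P\<in>paths crit n z. ks (sg ind d P) (jt P r 1)) = (\<Sum>P\<in>paths crit n z. \<Sum>y\<in>set crit. ks (E1 P y) (X P y))"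
  proof (rule sum.cong[OF refl])
    fix P assume P: "P \<in> paths crit n z"
    show "ks (sg ind d P) (jt P r 1) = (\<Sum>y\<in>set crit. ks (E1 P y) (X P y))"
      unfolding jt1_expand[OF P r] ks_sum ks_add E1_def X_def ..
  qed
  also have "\<dots> = (\<Sum>(P, y)\<in>paths crit n z \<times> set crit. ks (E1 P y) (X P y))" by (rule sum.cartesian_product)
  also have "\<dots> = (\<Sum>P'\<in>paths crit (Suc n) z. - ks (sg ind d P') (jt P' r 2))"
  proof (rule sum.reindex_bij_witness[where j = "\<lambda>(P, y). take r P @ y # drop r P" and i = "\<lambda>P'. (take r P' @ drop (Suc r) P', P' ! r)"])
    fix a assume a: "a \<in> paths crit n z \<times> set crit"
    obtain P y where a': "a = (P, y)" by (cases a)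
    have P: "P \<in> paths crit n z" and y: "y \<in> set crit" using a a' by auto
    have l: "length P = Suc n" using P by (simp add: paths_def)
    have ltr: "length (take r P) = r" using l r by simp
    show "(\<lambda>P'. (take r P' @ drop (Suc r) P', P' ! r)) ((\<lambda>(P, y). take r P @ y # drop r P) a) = a"
      using a' ltr by (simp add: nth_append)
    show "(\<lambda>(P, y). take r P @ y # drop r P) a \<in> paths crit (Suc n) z"
      using ins_facts(1)[OF P y r] a' by simp
    have lt: "length (take (r - 1) (mpth m P)) = r - 1" using l r by simp
    have upd: "(mpth m P)[r - 1 := mu2 (m (P ! (r - 1)) y) (m y (P ! r))]
       = take (r - 1) (mpth m P) @ mu2 (m (P ! (r - 1)) y) (m y (P ! r)) # drop r (mpth m P)"
      using l r by (simp add: upd_conv_take_nth_drop)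
    have XX: "phi (Suc n) (c (hd (take r P @ y # drop r P))) (replace_mu mu1 mu2 r 2 (mpth m (take r P @ y # drop r P))) = X P y"
      unfolding ins_facts(2,3)[OF P y r] replace_mu_2[OF lt r(1)] X_def upd ..
    have odd: "odd (E1 P y - (sg ind d (take r P @ y # drop r P) + int (r + 2 * (Suc (Suc n) - r - 2))))"
      unfolding E1_def ins_facts(4)[OF P y r] using r by presburger
    show "- ks (sg ind d ((\<lambda>(P, y). take r P @ y # drop r P) a)) (jt ((\<lambda>(P, y). take r P @ y # drop r P) a) r 2)
       = (case a of (P, y) \<Rightarrow> ks (E1 P y) (X P y))"
      unfolding a' using ks_neg_cong[OF odd, of "X P y"]
      by (simp add: jt2_form[OF ins_facts(1)[OF P y r] r] XX ks_add)
  next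
    fix b assume b: "b \<in> paths crit (Suc n) z"
    have l: "length b = Suc (Suc n)" and s: "set b \<subseteq> set crit" and la: "last b = z" using b by (auto simp: paths_def)
    have ltr: "length (take r b) = r" using l r by simp
    show "(\<lambda>(P, y). take r P @ y # drop r P) ((\<lambda>P'. (take r P' @ drop (Suc r) P', P' ! r)) b) = b"
      using ltr l r by (simp add: id_take_nth_drop[symmetric])
    have dne: "drop (Suc r) b \<noteq> []" using l r by simp
    have "b ! r \<in> set crit" using l r s by (auto intro!: subsetD[OF s] nth_mem)
    then show "(\<lambda>P'. (take r P' @ drop (Suc r) P', P' ! r)) b \<in> paths crit n z \<times> set crit"
      using l s la dne r by (auto simp: paths_def dest: in_set_takeD in_set_dropD)
  qed
  also have "\<dots> = - (\<Sum>P'\<in>paths crit (Suc n) z. ks (sg ind d P') (jt P' r 2))" by (simp add: sum_negf)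
  finally show ?thesis by simp
qed

definition A1 where "A1 z n = (\<Sum>P\<in>paths crit n z. ks (sg ind d P) (\<Sum>r\<in>{1..n}. jt P r 1))"
definition A2 where "A2 z n = (\<Sum>P\<in>paths crit n z. ks (sg ind d P) (\<Sum>r\<in>{1..n - 1}. jt P r 2))"

lemma A12: "A1 z n + A2 z (Suc n) = 0"
proof -
  have 1: "A1 z n = (\<Sum>r\<in>{1..n}. \<Sum>P\<in>paths crit n z. ks (sg ind d P) (jt P r 1))"
    unfolding A1_def ks_sum by (rule sum.swap)
  have 2: "A2 z (Suc n) = (\<Sum>r\<in>{1..n}. \<Sum>P\<in>paths crit (Suc n) z. ks (sg ind d P) (jt P r 2))"
    unfolding A2_def ks_sum diff_Suc_1 by (rule sum.swap)
  show ?thesis unfolding 1 2 sum.distrib[symmetric] by (rule sum.neutral, rule ballI, rule pair) auto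
qed

lemma A2_0: "A2 z 0 = 0" unfolding A2_def by simp

lemma A1_vanish: assumes "K0 \<le> n" shows "A1 z n = 0"
  unfolding A1_def
proof (rule sum.neutral, rule ballI)
  fix P assume P: "P \<in> paths crit n z"
  have l: "length P = Suc n" using P by (simp add: paths_def)
  have lg: "length (mpth m P) = n" using l by simp
  obtain j where j: "j < n" "mpth m P ! j = 0" using zero_edge[OF P assms] lg by (auto simp: in_set_conv_nth)
  have "jt P r 1 = 0" if r: "r \<in> {1..n}" for r
  proof -
    let ?L = "(mpth m P)[r - 1 := mu1 (mpth m P ! (r - 1))]"
    have "?L ! j = 0" using j r lg mu1_0 by (cases "j = r - 1") auto
    have lL: "length ?L = n" using lg by simp
    have "0 \<in> set ?L" using j lL \<open>?L ! j = 0\<close> by (metis nth_mem)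
    then have "phi (Suc n) (c (hd P)) ?L = 0" by (rule sl_slot_zero[OF slP lL])
    moreover have "replace_mu mu1 mu2 r 1 (mpth m P) = ?L" using r lg by (intro replace_mu_1) auto
    ultimately show ?thesis unfolding jt_def l by simp
  qed
  then show "ks (sg ind d P) (\<Sum>r\<in>{1..n}. jt P r 1) = 0" by simp
qed

lemma junk_total:
  assumes K: "K0 \<le> K"
  shows "(\<Sum>n\<le>K. \<Sum>P\<in>paths crit n z. ks (sg ind d P) (\<Sum>r\<in>{1..Suc n}. \<Sum>s\<in>{1..Suc n - r}. jt P r s)) = 0"
proof -
  have "(\<Sum>n\<le>K. \<Sum>P\<in>paths crit n z. ks (sg ind d P) (\<Sum>r\<in>{1..Suc n}. \<Sum>s\<in>{1..Suc n - r}. jt P r s))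
      = (\<Sum>n\<le>K. A1 z n + A2 z n)"
  proof (rule sum.cong[OF refl])
    fix n
    have "(\<Sum>P\<in>paths crit n z. ks (sg ind d P) (\<Sum>r\<in>{1..Suc n}. \<Sum>s\<in>{1..Suc n - r}. jt P r s))
       = (\<Sum>P\<in>paths crit n z. ks (sg ind d P) (\<Sum>r\<in>{1..n}. jt P r 1) + ks (sg ind d P) (\<Sum>r\<in>{1..n - 1}. jt P r 2))"
    proof (rule sum.cong[OF refl])
      fix P assume "P \<in> paths crit n z"
      then have l: "length P = Suc n" by (simp add: paths_def)
      show "ks (sg ind d P) (\<Sum>r\<in>{1..Suc n}. \<Sum>s\<in>{1..Suc n - r}. jt P r s) =
        ks (sg ind d P) (\<Sum>r\<in>{1..n}. jt P r 1) + ks (sg ind d P) (\<Sum>r\<in>{1..n - 1}. jt P r 2)"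
        unfolding junk_split[OF l] ks_plus ..
    qed
    then show "(\<Sum>P\<in>paths crit n z. ks (sg ind d P) (\<Sum>r\<in>{1..Suc n}. \<Sum>s\<in>{1..Suc n - r}. jt P r s)) = A1 z n + A2 z n"
      unfolding A1_def A2_def by (simp add: sum.distrib)
  qed
  also have "\<dots> = (\<Sum>n\<le>K. A2 z n - A2 z (Suc n))"
  proof (rule sum.cong[OF refl])
    fix n
    have "A1 z n = - A2 z (Suc n)" using A12[of z n] by (simp add: eq_neg_iff_add_eq_0)
    then show "A1 z n + A2 z n = A2 z n - A2 z (Suc n)" by simp
  qed
  also have "\<dots> = A2 z 0 - A2 z (Suc K)" by (rule sum_telescope)
  also have "\<dots> = A1 z K"
  proof -
    have h: "A1 z K = - A2 z (Suc K)" using A12[of z K] by (simp add: eq_neg_iff_add_eq_0)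
    show ?thesis using h A2_0[of z] by simp
  qed
  also have "\<dots> = 0" by (rule A1_vanish[OF K])
  finally show ?thesis .
qed

end



lemma par1: "even (int (Suc q * a) - (int (a * q) + int a * (d - 1 - d)))"
  by (simp add: algebra_simps)
lemma par2: "even (int ((Suc q + 1) * a) - (int (a * q) + int a * (d - d)))"
  by (simp add: algebra_simps)

context tw2 begin

lemma main: "twisted nuB crit ind m d (twisted phi crit ind m d c) = twisted phi crit ind m (d - 1) (twisted nuA crit ind m d c)"
proof (rule ext)
  fix z
  define gs where "gs P = mpth m P" for P
  define NP where "NP n P = (\<Sum>q\<le>n. ks (int ((n - q) * q) + int (n - q) * (d - d))
        (nuB (Suc (n - q)) (phi (Suc q) (c (hd P)) (take q (gs P))) (drop q (gs P))))" for n P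
  define PN where "PN n P = (\<Sum>q\<le>n. ks (int ((n - q) * q) + int (n - q) * (d - 1 - d))
        (phi (Suc (n - q)) (nuA (Suc q) (c (hd P)) (take q (gs P))) (drop q (gs P))))" for n P
  define JP where "JP n P = (\<Sum>r\<in>{1..Suc n}. \<Sum>s\<in>{1..Suc n - r}. jt P r s)" for n P
  have L: "twisted nuB crit ind m d (twisted phi crit ind m d c) z = (\<Sum>n\<le>K0. \<Sum>P\<in>paths crit n z. ks (sg ind d P) (NP n P))"
    unfolding NP_def gs_def by (rule comp_twisted[OF slB slP order_refl])
  have R: "twisted phi crit ind m (d - 1) (twisted nuA crit ind m d c) z = (\<Sum>n\<le>K0. \<Sum>P\<in>paths crit n z. ks (sg ind d P) (PN n P))"
    unfolding PN_def gs_def by (rule comp_twisted[OF slP slA order_refl])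
  have eqP: "NP n P = PN n P + JP n P" if P: "P \<in> paths crit n z" for n P
  proof -
    have m1: "(\<Sum>s\<in>{1..Suc n}. ks (int (s * (Suc n - s)))
            (phi (Suc n - s + 1) (nuA s (c (hd P)) (take (s - 1) (gs P))) (drop (s - 1) (gs P)))) = PN n P"
      unfolding sum_Suc_shift PN_def
    proof (rule sum.cong[OF refl])
      fix q assume "q \<in> {..n}"
      then have q: "q \<le> n" by simp
      have e: "n - q + 1 = Suc (n - q)" "Suc n - Suc q = n - q" using q by auto
      show "ks (int (Suc q * (Suc n - Suc q))) (phi (Suc n - Suc q + 1) (nuA (Suc q) (c (hd P)) (take (Suc q - 1) (gs P))) (drop (Suc q - 1) (gs P)))
          = ks (int ((n - q) * q) + int (n - q) * (d - 1 - d)) (phi (Suc (n - q)) (nuA (Suc q) (c (hd P)) (take q (gs P))) (drop q (gs P)))"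
        unfolding e(2) e(1) diff_Suc_1 by (rule ks_cong[OF par1])
    qed
    have m2: "(\<Sum>s\<in>{1..Suc n}. ks (int ((s + 1) * (Suc n - s)))
            (nuB (Suc n - s + 1) (phi s (c (hd P)) (take (s - 1) (gs P))) (drop (s - 1) (gs P)))) = NP n P"
      unfolding sum_Suc_shift NP_def
    proof (rule sum.cong[OF refl])
      fix q assume "q \<in> {..n}"
      then have q: "q \<le> n" by simp
      have e: "n - q + 1 = Suc (n - q)" "Suc n - Suc q = n - q" using q by auto
      show "ks (int ((Suc q + 1) * (Suc n - Suc q))) (nuB (Suc n - Suc q + 1) (phi (Suc q) (c (hd P)) (take (Suc q - 1) (gs P))) (drop (Suc q - 1) (gs P)))
          = ks (int ((n - q) * q) + int (n - q) * (d - d)) (nuB (Suc (n - q)) (phi (Suc q) (c (hd P)) (take q (gs P))) (drop q (gs P)))"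
        unfolding e(2) e(1) diff_Suc_1 by (rule ks_cong[OF par2])
    qed
    show ?thesis using morph_P[OF P] unfolding gs_def[symmetric] m1 m2 JP_def by simp
  qed
  have "(\<Sum>n\<le>K0. \<Sum>P\<in>paths crit n z. ks (sg ind d P) (NP n P)) =
     (\<Sum>n\<le>K0. \<Sum>P\<in>paths crit n z. ks (sg ind d P) (PN n P)) + (\<Sum>n\<le>K0. \<Sum>P\<in>paths crit n z. ks (sg ind d P) (JP n P))"
    unfolding sum.distrib[symmetric]
    by (intro sum.cong refl) (simp add: eqP ks_plus)
  also have "(\<Sum>n\<le>K0. \<Sum>P\<in>paths crit n z. ks (sg ind d P) (JP n P)) = 0"
    unfolding JP_def by (rule junk_total[OF order_refl])
  finally show "twisted nuB crit ind m d (twisted phi crit ind m d c) z = twisted phi crit ind m (d - 1) (twisted nuA crit ind m d c) z"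
    unfolding L R by simp
qed

end


theorem propositionB:
  fixes GC :: "int \<Rightarrow> 'c::ab_group_add set"
    and mu1 :: "'c \<Rightarrow> 'c" and mu2 :: "'c \<Rightarrow> 'c \<Rightarrow> 'c"
    and crit :: "'x list" and ind :: "'x \<Rightarrow> int" and m :: "'x \<Rightarrow> 'x \<Rightarrow> 'c"
    and GA :: "int \<Rightarrow> 'a::ab_group_add set" and nuA :: "nat \<Rightarrow> 'a \<Rightarrow> 'c list \<Rightarrow> 'a"
    and GB :: "int \<Rightarrow> 'b::ab_group_add set" and nuB :: "nat \<Rightarrow> 'b \<Rightarrow> 'c list \<Rightarrow> 'b"
    and phi :: "nat \<Rightarrow> 'a \<Rightarrow> 'c list \<Rightarrow> 'b"
    and d :: int and c :: "'x \<Rightarrow> 'a"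
  assumes "dga GC mu1 mu2"
    and "twisting_cocycle GC mu1 mu2 crit ind m"
    and "ainf_module GC mu1 mu2 GA nuA"
    and "ainf_module GC mu1 mu2 GB nuB"
    and "ainf_morphism GC mu1 mu2 GA nuA GB nuB phi"
    and "\<forall>x\<in>set crit. c x \<in> GA (d - ind x)"
  shows "twisted nuB crit ind m d (twisted phi crit ind m d c)
       = twisted phi crit ind m (d - 1) (twisted nuA crit ind m d c)"
  proof -
  have "tw2 GC mu1 mu2 crit ind m GA nuA GB nuB phi d c"
    unfolding tw2_def tw2_axioms_def tw_def using assms by auto
  then show ?thesis by (rule tw2.main)
qed

end
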